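(* Let $s\le L$ be positive integers, $\mathbf{D}\in\mathbb{R}^{N\times N}$, $\mathbf{H}\in\mathbb{R}^{N\times L}$, $\mathbf{A}\in\mathbb{R}^{m\times N}$ with $m<N$, and consider the system $\mathbf{x}_k=\mathbf{D}\mathbf{x}_{k-1}+\mathbf{H}\mathbf{h}_k$, $\mathbf{y}_k=\mathbf{A}\mathbf{x}_k$, with inputs satisfying $\|\mathbf{h}_k\|_0\le s$. If the system is output $s$-sparse-controllable, then $s\ge m-\operatorname{rank}(\mathbf{A}\mathbf{D})$ and, for all $\lambda\in\mathbb{C}$, the matrix $\mathbf{A}\begin{bmatrix}\lambda\mathbf{I}-\mathbf{D} & \mathbf{H}\end{bmatrix}\in\mathbb{C}^{m\times(N+L)}$ has rank $m$.
   Context: $\|\cdot\|_0$ denotes the number of nonzero entries. The system is output $s$-sparse-controllable if for every initial state $\mathbf{x}_0\in\mathbb{R}^N$ and every desired output $\mathbf{y}\in\mathbb{R}^m$ there exist a finite $K$ and inputs $\mathbf{h}_1,\dots,\mathbf{h}_K\in\mathbb{R}^L$ with $\|\mathbf{h}_k\|_0\le s$ for all $k$ such that $\mathbf{y}_K=\mathbf{A}\mathbf{x}_K=\mathbf{y}$. *)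

theory Defs
  imports "HOL-Analysis.Analysis"
begin

definition l0norm :: "real^'l \<Rightarrow> nat" where
  "l0norm h = card {i. h $ i \<noteq> 0}"

primrec state :: "real^'n^'n \<Rightarrow> real^'l^'n \<Rightarrow> real^'n \<Rightarrow> (nat \<Rightarrow> real^'l) \<Rightarrow> nat \<Rightarrow> real^'n" where
  "state D H x0 hs 0 = x0"
| "state D H x0 hs (Suc k) = D *v state D H x0 hs k + H *v hs (Suc k)"

definition output_sparse_controllable ::
  "real^'n^'n \<Rightarrow> real^'l^'n \<Rightarrow> real^'n^'m \<Rightarrow> nat \<Rightarrow> bool" where
  "output_sparse_controllable D H A s \<longleftrightarrow>
     (\<forall>x0 y. \<exists>K hs. (\<forall>k\<in>{1..K}. l0norm (hs k) \<le> s) \<and> A *v state D H x0 hs K = y)"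

definition cmat :: "real^'c^'r \<Rightarrow> complex^'c^'r" where
  "cmat M = (\<chi> i j. complex_of_real (M $ i $ j))"

definition pbh_block :: "complex \<Rightarrow> real^'n^'n \<Rightarrow> real^'l^'n \<Rightarrow> complex^('n + 'l)^'n" where
  "pbh_block z D H = (\<chi> i j. case j of
       Inl c \<Rightarrow> (mat z - cmat D) $ i $ c
     | Inr c \<Rightarrow> cmat H $ i $ c)"

end

theory Submission
  imports Defs
begin


lemma complex_rank_full:
  fixes M :: "complex^'k^'m"
  assumes inj: "\<And>w. w v* M = 0 \<Longrightarrow> w = 0"
  shows "rank M = CARD('m)"
proof -
  let ?g = "(*v) (transpose M)"
  have lin: "Vector_Spaces.linear (*s) (*s) ?g"
    by (rule matrix_vector_mul_linear_gen)
  have injg: "inj_on ?g (vec.span cart_basis)"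
    using vec.linear_inj_iff_eq_0[OF lin] inj by (simp add: inj_on_def)
  have rows: "rows M = ?g ` cart_basis"
  proof -
    have "row i M = transpose M *v axis i 1" for i
      by (simp add: vec_eq_iff row_def transpose_def matrix_vector_mult_def axis_def
          if_distrib cong: if_cong)
    then show ?thesis by (auto simp: rows_def cart_basis_def)
  qed
  have "rank M = vec.dim (?g ` cart_basis)" by (simp add: row_rank_def_gen rows)
  also have "\<dots> = vec.dim (cart_basis :: (complex^'m) set)"
    by (rule vec.dim_image_eq[OF lin injg])
  also have "\<dots> = CARD('m)"
    using vec.dim_eq_card_independent[OF independent_cart_basis] by (simp add: card_cart_basis)
  finally show ?thesis .
qed

lemma pbh_part:
  fixes D :: "real^'n^'n" and H :: "real^'l^'n" and A :: "real^'n^'m" and s :: nat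
  assumes ctrl: "output_sparse_controllable D H A s"
  shows "rank (cmat A ** pbh_block z D H) = CARD('m)"
proof (rule complex_rank_full)
  fix w assume w0: "w v* (cmat A ** pbh_block z D H) = 0"
  define u where "u = w v* cmat A"
  have u0: "u v* pbh_block z D H = 0" using w0 by (simp add: u_def vector_matrix_mul_assoc)
  have uD: "(\<Sum>i\<in>UNIV. u$i * of_real (D$i$c)) = z * u$c" for c
  proof -
    have "(u v* pbh_block z D H) $ Inl c = 0" using u0 by simp
    then have "(\<Sum>i\<in>UNIV. u$i * ((if i = c then z else 0) - of_real (D$i$c))) = 0"
      by (simp add: vector_matrix_mult_def pbh_block_def cmat_def mat_def)
    moreover have "(\<Sum>i\<in>UNIV. u$i * ((if i = c then z else 0) - of_real (D$i$c)))
       = (\<Sum>i\<in>UNIV. u$i * (if i = c then z else 0)) - (\<Sum>i\<in>UNIV. u$i * of_real (D$i$c))"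
      by (simp add: right_diff_distrib sum_subtractf)
    moreover have "(\<Sum>i\<in>UNIV. u$i * (if i = c then z else 0)) = (\<Sum>i\<in>UNIV. if i = c then u$i * z else 0)"
      by (rule sum.cong) auto
    ultimately show ?thesis by (simp add: mult.commute)
  qed
  have uH: "(\<Sum>i\<in>UNIV. u$i * of_real (H$i$c)) = 0" for c
  proof -
    have "(u v* pbh_block z D H) $ Inr c = 0" using u0 by simp
    then show ?thesis
      by (simp add: vector_matrix_mult_def pbh_block_def cmat_def)
  qed
  define f where "f x = (\<Sum>i\<in>UNIV. u$i * of_real (x$i))" for x :: "real^'n"
  have fD: "f (D *v x) = z * f x" for x
  proof -
    have "f (D *v x) = (\<Sum>i\<in>UNIV. \<Sum>j\<in>UNIV. u$i * of_real (D$i$j) * of_real (x$j))"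
      by (simp add: f_def matrix_vector_mult_def of_real_sum sum_distrib_left mult.assoc)
    also have "\<dots> = (\<Sum>j\<in>UNIV. (\<Sum>i\<in>UNIV. u$i * of_real (D$i$j)) * of_real (x$j))"
      by (subst sum.swap) (simp add: sum_distrib_right)
    also have "\<dots> = z * f x"
      by (simp add: uD f_def sum_distrib_left mult.assoc)
    finally show ?thesis .
  qed
  have fH: "f (H *v h) = 0" for h
  proof -
    have "f (H *v h) = (\<Sum>i\<in>UNIV. \<Sum>j\<in>UNIV. u$i * of_real (H$i$j) * of_real (h$j))"
      by (simp add: f_def matrix_vector_mult_def of_real_sum sum_distrib_left mult.assoc)
    also have "\<dots> = (\<Sum>j\<in>UNIV. (\<Sum>i\<in>UNIV. u$i * of_real (H$i$j)) * of_real (h$j))"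
      by (subst sum.swap) (simp add: sum_distrib_right)
    also have "\<dots> = 0"
      by (simp add: uH)
    finally show ?thesis .
  qed
  have fadd: "f (a + b) = f a + f b" for a b
    by (simp add: f_def sum.distrib algebra_simps)
  have fstate: "f (state D H 0 hs K) = 0" for hs K
  proof (induction K)
    case 0 then show ?case by (simp add: f_def)
  next
    case (Suc K) then show ?case by (simp only: state.simps fadd fD fH) simp
  qed
  have fA: "f x = (\<Sum>k\<in>UNIV. w$k * of_real ((A *v x)$k))" for x
  proof -
    have "f x = (\<Sum>i\<in>UNIV. \<Sum>k\<in>UNIV. w$k * of_real (A$k$i) * of_real (x$i))"
      by (simp add: f_def u_def vector_matrix_mult_def cmat_def sum_distrib_right)
    also have "\<dots> = (\<Sum>k\<in>UNIV. w$k * of_real ((A *v x)$k))"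
      by (subst sum.swap) (simp add: matrix_vector_mult_def of_real_sum sum_distrib_left mult.assoc)
    finally show ?thesis .
  qed
  have reach: "(\<Sum>k\<in>UNIV. w$k * of_real (y$k)) = 0" for y
  proof -
    from ctrl obtain K hs where "A *v state D H 0 hs K = y"
      unfolding output_sparse_controllable_def by blast
    then show ?thesis using fstate[of hs K] fA[of "state D H 0 hs K"] by simp
  qed
  have re: "Re (w$k) = 0" for k
  proof -
    have "Re (\<Sum>k\<in>UNIV. w$k * of_real (Re (w$k))) = 0" using reach[of "\<chi> k. Re (w$k)"] by simp
    then have "(\<Sum>k\<in>UNIV. (Re (w$k))^2) = 0" by (simp add: Re_sum power2_eq_square)
    then show ?thesis by (simp add: sum_nonneg_eq_0_iff)
  qed
  have im: "Im (w$k) = 0" for k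
  proof -
    have "Im (\<Sum>k\<in>UNIV. w$k * of_real (Im (w$k))) = 0" using reach[of "\<chi> k. Im (w$k)"] by simp
    then have "(\<Sum>k\<in>UNIV. (Im (w$k))^2) = 0" by (simp add: Im_sum power2_eq_square)
    then show ?thesis by (simp add: sum_nonneg_eq_0_iff)
  qed
  show "w = 0" using re im by (simp add: vec_eq_iff complex_eq_iff)
qed


lemma rank_part:
  fixes D :: "real^'n^'n" and H :: "real^'l^'n" and A :: "real^'n^'m" and s :: nat
  assumes ctrl: "output_sparse_controllable D H A s"
  shows "CARD('m) \<le> rank (A ** D) + s"
proof (rule ccontr)
  assume less: "\<not> CARD('m) \<le> rank (A ** D) + s"
  define R where "R = range ((*v) (A ** D))"
  define U where "U S = {h :: real^'l. \<forall>i. i \<notin> S \<longrightarrow> h$i = 0}" for S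
  define T where "T S = {a + b | a b. a \<in> R \<and> b \<in> (*v) (A ** H) ` U S}" for S
  have cover: "UNIV \<subseteq> \<Union> (T ` {S. card S \<le> s})"
  proof
    fix y :: "real^'m"
    have "\<exists>K hs. (\<forall>k\<in>{1..K}. l0norm (hs k) \<le> s) \<and> A *v state D H 0 hs K = y"
      using spec[OF spec[OF ctrl[unfolded output_sparse_controllable_def], of 0], of y] .
    then obtain K hs where bnd: "\<forall>k\<in>{1..K}. l0norm (hs k) \<le> s"
        and eq: "A *v state D H 0 hs K = y"
      by (elim exE conjE)
    show "y \<in> \<Union> (T ` {S. card S \<le> s})"
    proof (cases K)
      case 0
      then have "y = 0 + 0" using eq by (simp only: state.simps matrix_vector_mult_0_right add_0_right)
      moreover have "(0::real^'m) \<in> R" unfolding R_def by (rule range_eqI[of _ _ 0]) simp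
      moreover have "(0::real^'l) \<in> U {}" by (simp add: U_def)
      then have "(0::real^'m) \<in> (*v) (A ** H) ` U {}"
        by (rule image_eqI[rotated]) simp
      ultimately have "y \<in> T {}" unfolding T_def by blast
      then show ?thesis by (rule UN_I[rotated]) simp
    next
      case (Suc k)
      define x where "x = state D H 0 hs k"
      define h where "h = hs (Suc k)"
      have y: "y = (A ** D) *v x + (A ** H) *v h"
        using eq Suc by (simp only: x_def h_def state.simps matrix_vector_right_distrib matrix_vector_mul_assoc)
      have c: "card {i. h $ i \<noteq> 0} \<le> s"
        using bnd Suc unfolding h_def l0norm_def by auto
      have "h \<in> U {i. h $ i \<noteq> 0}" unfolding U_def by auto
      then have hq: "(A ** H) *v h \<in> (*v) (A ** H) ` U {i. h $ i \<noteq> 0}" by (rule imageI)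
      have xr: "(A ** D) *v x \<in> R" unfolding R_def by (rule rangeI)
      have "y \<in> T {i. h $ i \<noteq> 0}" unfolding T_def y using hq xr by blast
      then show ?thesis using c by (intro UN_I[rotated]) simp_all
    qed
  qed
  have neg: "negligible (T S)" if cS: "card S \<le> s" for S
  proof -
    have subR: "subspace R" unfolding R_def
      by (rule linear_subspace_image[OF matrix_vector_mul_linear subspace_UNIV])
    have subU: "subspace (U S)" unfolding U_def subspace_def by auto
    have subQ: "subspace ((*v) (A ** H) ` U S)"
      by (rule linear_subspace_image[OF matrix_vector_mul_linear subU])
    have "dim (T S) + dim (R \<inter> (*v) (A ** H) ` U S) = dim R + dim ((*v) (A ** H) ` U S)"
      unfolding T_def by (rule dim_sums_Int[OF subR subQ])
    moreover have "dim R = rank (A ** D)" unfolding R_def by (simp add: rank_dim_range)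
    moreover have "dim ((*v) (A ** H) ` U S) \<le> dim (U S)"
      by (rule dim_image_le[OF matrix_vector_mul_linear])
    moreover have "dim (U S) = card S"
      unfolding U_def using dim_substandard_cart[of S, where 'a=real] by (simp add: dim_vec_eq)
    ultimately have "dim (T S) < DIM(real^'m)" using less cS by simp
    then show ?thesis by (rule negligible_lowdim)
  qed
  have "negligible (\<Union> (T ` {S. card S \<le> s}))"
    by (rule negligible_Union) (auto intro: neg)
  then have "negligible (UNIV :: (real^'m) set)" by (rule negligible_subset[OF _ cover])
  then show False by simp
qed


theorem corollary1:
  fixes D :: "real^'n^'n" and H :: "real^'l^'n" and A :: "real^'n^'m" and s :: nat
  assumes "0 < s" and "s \<le> CARD('l)" and "CARD('m) < CARD('n)"
    and "output_sparse_controllable D H A s"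
  shows "int s \<ge> int CARD('m) - int (rank (A ** D)) \<and>
         (\<forall>z::complex. rank (cmat A ** pbh_block z D H) = CARD('m))"
proof
  show "int s \<ge> int CARD('m) - int (rank (A ** D))"
    using rank_part[OF assms(4)] by linarith
  show "\<forall>z::complex. rank (cmat A ** pbh_block z D H) = CARD('m)"
    using pbh_part[OF assms(4)] by blast
qed

end
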